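(* Let $L$ be a finite lattice, $a\in L$, and $\varphi\in M_1(L)$. Then the function $x\mapsto\lambda(\varphi;a,x)$ belongs to $M_1(L)$.
   Context: $L$ is a finite lattice with join $\vee$ and meet $\wedge$. $M_1(L)$ is the set of nonnegative monotone (order-preserving) real functions on $L$. A path from $a$ to $b$ in $L$ is a sequence $H=(h_0,h_1,\dots,h_m)$ of distinct elements of $L$ with $h_0=a$, $h_m=b$ ($m\ge0$), viewed as a tree with edges $\{h_{i-1},h_i\}$; for it $\varphi(H)=\sum_{i=0}^m\varphi(h_i)-\sum_{i=1}^m\varphi(h_{i-1}\vee h_i)$. Define $\lambda(\varphi;a,b)=\max\{\varphi(H): H\text{ a path from }a\text{ to }b\}$. *)

theory Defs
  imports Complex_Main
begin

definition M1 :: "('a::lattice \<Rightarrow> real) set" where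
  "M1 = {\<phi>. mono \<phi> \<and> (\<forall>x. 0 \<le> \<phi> x)}"

definition lattice_paths :: "'a \<Rightarrow> 'a \<Rightarrow> 'a list set" where
  "lattice_paths a b = {H. H \<noteq> [] \<and> distinct H \<and> hd H = a \<and> last H = b}"

definition path_val :: "('a::lattice \<Rightarrow> real) \<Rightarrow> 'a list \<Rightarrow> real" where
  "path_val \<phi> H = (\<Sum>i<length H. \<phi> (H ! i))
                   - (\<Sum>i\<in>{1..<length H}. \<phi> (sup (H ! (i - 1)) (H ! i)))"

definition lam :: "('a::{lattice,finite} \<Rightarrow> real) \<Rightarrow> 'a \<Rightarrow> 'a \<Rightarrow> real" where
  "lam \<phi> a b = Max (path_val \<phi> ` lattice_paths a b)"

end

theory Submission
  imports Defs
begin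

lemma pv_snoc:
  assumes "H \<noteq> []"
  shows "path_val \<phi> (H @ [u]) = path_val \<phi> H + \<phi> u - \<phi> (sup (last H) u)"
proof -
  define n where "n = length H"
  have n1: "n \<ge> 1" using assms n_def by (cases H) auto
  have A: "(\<Sum>i<length (H@[u]). \<phi> ((H@[u]) ! i)) = (\<Sum>i<n. \<phi> (H ! i)) + \<phi> u"
    by (simp add: n_def nth_append)
  have "(\<Sum>i\<in>{1..<length (H@[u])}. \<phi> (sup ((H@[u]) ! (i - 1)) ((H@[u]) ! i)))
      = (\<Sum>i\<in>{1..<n}. \<phi> (sup ((H@[u]) ! (i - 1)) ((H@[u]) ! i))) + \<phi> (sup ((H@[u]) ! (n - 1)) ((H@[u]) ! n))"
    using n1 assms by (simp add: n_def sum.atLeastLessThan_Suc)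
  also have "(\<Sum>i\<in>{1..<n}. \<phi> (sup ((H@[u]) ! (i - 1)) ((H@[u]) ! i))) = (\<Sum>i\<in>{1..<n}. \<phi> (sup (H ! (i - 1)) (H ! i)))"
    by (rule sum.cong) (auto simp: nth_append n_def)
  also have "(H@[u]) ! (n - 1) = last H" using assms n1 by (simp add: nth_append n_def last_conv_nth)
  also have "(H@[u]) ! n = u" by (simp add: n_def)
  finally show ?thesis using A unfolding path_val_def n_def by simp
qed

lemma pv_prefix:
  assumes "P \<noteq> []" "mono \<phi>"
  shows "path_val \<phi> (P @ Q) \<le> path_val \<phi> P"
proof (induction Q rule: rev_induct)
  case Nil then show ?case by simp
next
  case (snoc u Q)
  have "path_val \<phi> (P @ Q @ [u]) = path_val \<phi> (P @ Q) + \<phi> u - \<phi> (sup (last (P@Q)) u)"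
    using pv_snoc[of "P@Q" \<phi> u] assms by simp
  moreover have "\<phi> u \<le> \<phi> (sup (last (P@Q)) u)" using assms(2) by (simp add: monoD)
  ultimately show ?case using snoc by simp
qed

lemma paths_finite: "finite (lattice_paths (a::'a::finite) b)"
proof -
  have "lattice_paths a b \<subseteq> {xs. set xs \<subseteq> UNIV \<and> distinct xs}"
    unfolding lattice_paths_def by auto
  moreover have "finite {xs. set xs \<subseteq> (UNIV::'a set) \<and> distinct xs}"
    by (rule finite_subset_distinct) simp
  ultimately show ?thesis by (rule finite_subset)
qed

lemma lam_ge:
  fixes \<phi> :: "'a::{lattice,finite} \<Rightarrow> real"
  assumes "H \<in> lattice_paths a b"
  shows "path_val \<phi> H \<le> lam \<phi> a b"
  unfolding lam_def using assms paths_finite by (intro Max_ge) auto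

lemma lam_attained:
  fixes \<phi> :: "'a::{lattice,finite} \<Rightarrow> real"
  assumes "lattice_paths a b \<noteq> {}"
  shows "\<exists>H\<in>lattice_paths a b. path_val \<phi> H = lam \<phi> a b"
proof -
  have "lam \<phi> a b \<in> path_val \<phi> ` lattice_paths a b"
    unfolding lam_def using assms paths_finite by (intro Max_in) auto
  then show ?thesis by auto
qed

theorem lemma3p10:
  fixes \<phi> :: "'a::{lattice,finite} \<Rightarrow> real" and a :: 'a
  assumes "\<phi> \<in> M1"
  shows "(\<lambda>x. lam \<phi> a x) \<in> M1"
proof -
  have mono: "mono \<phi>" and nn: "\<And>x. 0 \<le> \<phi> x" using assms by (auto simp: M1_def)
  have ne: "lattice_paths a b \<noteq> {}" for b
  proof (cases "a = b")
    case True then have "[a] \<in> lattice_paths a b" by (simp add: lattice_paths_def)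
    then show ?thesis by blast
  next
    case False then have "[a,b] \<in> lattice_paths a b" by (simp add: lattice_paths_def)
    then show ?thesis by blast
  qed
  have pos: "0 \<le> lam \<phi> a b" for b
  proof (cases "a = b")
    case True then have "[a] \<in> lattice_paths a b" by (simp add: lattice_paths_def)
    from lam_ge[OF this, of \<phi>] nn[of a] show ?thesis by (simp add: path_val_def)
  next
    case ab: False
    show ?thesis
    proof (cases "inf a b = a")
      case True
      then have le: "sup a b = b" by (metis inf.absorb_iff1 sup.absorb_iff2)
      have "[a,b] \<in> lattice_paths a b" using ab by (simp add: lattice_paths_def)
      from lam_ge[OF this, of \<phi>] nn[of a] le show ?thesis
        by (simp add: path_val_def)
    next
      case F1: False
      show ?thesis
      proof (cases "inf a b = b")
        case True
        then have le: "sup a b = a" by (metis inf.absorb_iff2 sup.absorb_iff1)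
        have "[a,b] \<in> lattice_paths a b" using ab by (simp add: lattice_paths_def)
        from lam_ge[OF this, of \<phi>] nn[of b] le show ?thesis
          by (simp add: path_val_def)
      next
        case F2: False
        have s1: "sup a (inf a b) = a" by simp
        have s2: "sup (inf a b) b = b" by (rule sup.absorb2) simp
        have "[a, inf a b, b] \<in> lattice_paths a b" using ab F1 F2
          by (auto simp: lattice_paths_def)
        from lam_ge[OF this, of \<phi>] nn[of "inf a b"] s1 s2 show ?thesis
          by (simp add: path_val_def numeral_eq_Suc atLeastLessThanSuc)
      qed
    qed
  qed
  have mon: "lam \<phi> a x \<le> lam \<phi> a y" if xy: "x \<le> y" for x y
  proof -
    obtain H where H: "H \<in> lattice_paths a x" and Hv: "path_val \<phi> H = lam \<phi> a x"
      using lam_attained[OF ne] by blast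
    have Hne: "H \<noteq> []" and Hd: "distinct H" "hd H = a" "last H = x"
      using H by (auto simp: lattice_paths_def)
    show ?thesis
    proof (cases "y \<in> set H")
      case True
      then obtain P Q where PQ: "H = P @ y # Q" by (meson split_list)
      have "P @ [y] \<in> lattice_paths a y"
        using Hd PQ by (cases P) (auto simp: lattice_paths_def)
      moreover have "path_val \<phi> H \<le> path_val \<phi> (P @ [y])"
        using pv_prefix[of "P @ [y]" \<phi> Q] mono PQ by simp
      ultimately show ?thesis using Hv lam_ge[of "P @ [y]" a y \<phi>] by linarith
    next
      case False
      have "H @ [y] \<in> lattice_paths a y"
        using Hne Hd False by (auto simp: lattice_paths_def)
      moreover have "path_val \<phi> (H @ [y]) = path_val \<phi> H"
        using pv_snoc[OF Hne, of \<phi> y] Hd xy by (simp add: sup.absorb2)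
      ultimately show ?thesis using Hv lam_ge[of "H @ [y]" a y \<phi>] by linarith
    qed
  qed
  show ?thesis unfolding M1_def using pos mon by (auto intro: monoI)
qed

end
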